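(* There exists a family $\mathcal F_0$ of $3$ axis-parallel rectangles such that $\pi_L(\mathcal F_0)\ge \frac{36}{31}\,\pi(\mathcal F_0)$.
   Context: For a finite family $\mathcal F$ of closed axis-parallel rectangles in the plane, a point set $P\subset\mathbb R^2$ is $\mathcal F$-piercing if every translate of every rectangle in $\mathcal F$ contains a point of $P$. The density of a point set $P$ is $\limsup_{r\to\infty} |P\cap[-r,r]^2|/(2r)^2$. $\pi(\mathcal F)$ is the infimum of the densities of $\mathcal F$-piercing point sets, and $\pi_L(\mathcal F)$ is the infimum of the densities of $\mathcal F$-piercing lattices, where a lattice $\{iu+jv:i,j\in\mathbb Z\}$ ($u,v$ linearly independent) has density $1/|\det[u,v]|$. *)

theory Defs
  imports "HOL-Analysis.Analysis" "HOL-Library.Liminf_Limsup"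
begin

definition closed_axis_rect :: "(real \<times> real) set \<Rightarrow> bool" where
  "closed_axis_rect R \<longleftrightarrow> (\<exists>a b c d. a < b \<and> c < d \<and> R = {a..b} \<times> {c..d})"

definition translate :: "real \<times> real \<Rightarrow> (real \<times> real) set \<Rightarrow> (real \<times> real) set" where
  "translate t R = (\<lambda>p. p + t) ` R"

definition piercing :: "(real \<times> real) set set \<Rightarrow> (real \<times> real) set \<Rightarrow> bool" where
  "piercing F P \<longleftrightarrow> (\<forall>R\<in>F. \<forall>t. translate t R \<inter> P \<noteq> {})"

definition count_ratio :: "(real \<times> real) set \<Rightarrow> real \<Rightarrow> ereal" where
  "count_ratio P r = (if finite (P \<inter> ({-r..r} \<times> {-r..r}))
      then ereal (real (card (P \<inter> ({-r..r} \<times> {-r..r}))) / (2 * r)^2)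
      else \<infinity>)"

definition density :: "(real \<times> real) set \<Rightarrow> ereal" where
  "density P = Limsup at_top (count_ratio P)"

definition pierce_num :: "(real \<times> real) set set \<Rightarrow> ereal" where
  "pierce_num F = Inf {density P | P. piercing F P}"

definition lattice :: "real \<times> real \<Rightarrow> real \<times> real \<Rightarrow> (real \<times> real) set" where
  "lattice u v = {of_int i *\<^sub>R u + of_int j *\<^sub>R v | i j :: int. True}"

definition det2 :: "real \<times> real \<Rightarrow> real \<times> real \<Rightarrow> real" where
  "det2 u v = fst u * snd v - snd u * fst v"

definition lattice_pierce_num :: "(real \<times> real) set set \<Rightarrow> ereal" where
  "lattice_pierce_num F = Inf {ereal (1 / \<bar>det2 u v\<bar>) | u v.
      independent {u, v} \<and> u \<noteq> v \<and> piercing F (lattice u v)}"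

end

theory Submission
  imports Defs "HOL-Real_Asymp.Real_Asymp"
begin



lemma gap_core:
  fixes p1 p2 q1 q2 w h :: real and Q :: "(real \<times> real) set"
  assumes p1: "0 < p1" "p1 \<le> w" and p2: "0 \<le> p2"
    and D1: "p1*q2 - p2*q1 > p2 * w" and D2: "p1*q2 - p2*q1 > 0"
    and Qsub: "\<And>z. z \<in> Q \<Longrightarrow> \<exists>i j::int. z = (of_int i*p1 + of_int j*q1, of_int i*p2 + of_int j*q2)"
    and hit: "\<And>a b. \<exists>z\<in>Q. a \<le> fst z \<and> fst z \<le> a + w \<and> b \<le> snd z \<and> snd z \<le> b + h"
  shows "q2 + p2 * (1 + of_int \<lceil>-(w+q1)/p1\<rceil>) \<le> h"
proof (rule ccontr)
  define D where "D = p1*q2 - p2*q1"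
  define K where "K = \<lceil>-(w+q1)/p1\<rceil>"
  define G where "G = q2 + p2 * (1 + of_int K)"
  assume "\<not> q2 + p2 * (1 + of_int \<lceil>-(w+q1)/p1\<rceil>) \<le> h"
  hence Gh: "G > h" unfolding G_def K_def by simp
  have K1: "of_int K - 1 < -(w+q1)/p1" unfolding K_def by linarith
  hence K1': "(of_int K - 1) * p1 < -(w+q1)" using p1 by (simp add: field_simps)
  define \<delta> where "\<delta> = min p1 (-(w+q1) - (of_int K - 1)*p1) / 2"
  have d0: "\<delta> > 0" unfolding \<delta>_def using p1 K1' by simp
  have d1: "\<delta> < p1" unfolding \<delta>_def using p1 K1' by simp
  have d2: "(of_int K - 1) * p1 < -(w+q1) - \<delta>"
  proof -
    define E where "E = -(w+q1) - (of_int K - 1)*p1"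
    have E0: "E > 0" unfolding E_def using K1' by simp
    have "min p1 E \<le> E" by simp
    hence "\<delta> < E" unfolding \<delta>_def E_def[symmetric] using E0 by simp
    thus ?thesis unfolding E_def by simp
  qed
  define a where "a = -w - \<delta>"
  define b where "b = -p2 + (G - h)/2"
  obtain z where zQ: "z \<in> Q" and za: "a \<le> fst z" "fst z \<le> a + w" and zb: "b \<le> snd z" "snd z \<le> b + h"
    using hit[of a b] by blast
  obtain i j :: int where zij: "z = (of_int i*p1 + of_int j*q1, of_int i*p2 + of_int j*q2)"
    using Qsub[OF zQ] by blast
  define x where "x = fst z"
  define y where "y = snd z"
  have xe: "x = of_int i*p1 + of_int j*q1" and ye: "y = of_int i*p2 + of_int j*q2"
    using zij by (auto simp: x_def y_def)
  have key: "p1*y - p2*x = of_int j * D" unfolding xe ye D_def by (simp add: algebra_simps)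
  have xle: "x \<le> -\<delta>" using za unfolding x_def a_def by simp
  have xge: "x \<ge> -w - \<delta>" using za unfolding x_def a_def by simp
  have yge: "y \<ge> b" and yle: "y \<le> b + h" using zb unfolding y_def by auto
  have Dp: "D > p2 * w" "D > 0" using D1 D2 unfolding D_def by auto
  have pp: "p1 * p2 \<le> w * p2" using p1 p2 by (simp add: mult_right_mono)
  have Dp1: "D > p1 * p2" using Dp pp by (simp add: mult.commute)
  have bh: "b + h < G - p2" using Gh unfolding b_def by (simp add: field_simps)
  have Gp: "G - p2 = q2 + of_int K * p2" unfolding G_def by (simp add: algebra_simps)
  consider "j \<le> -1" | "j = 0" | "j = 1" | "j \<ge> 2" by linarith
  then show False
  proof cases
    case 1
    have "p1*y = p2*x + of_int j * D" using key by simp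
    also have "\<dots> \<le> p2 * (-\<delta>) + (-1) * D"
      using 1 Dp(2) p2 xle by (intro add_mono mult_left_mono mult_right_mono) auto
    also have "\<dots> \<le> - D" using p2 d0 by (simp add: mult_nonneg_nonneg)
    finally have "p1 * y \<le> -D" .
    hence "p1 * y < - (p1 * p2)" using Dp1 by simp
    hence "p1 * y < p1 * (-p2)" by simp
    hence "y < -p2" using p1(1) mult_less_cancel_left_pos by blast
    moreover have "b > -p2" unfolding b_def using Gh by simp
    ultimately show False using yge by simp
  next
    case 2
    hence "of_int i * p1 \<le> -\<delta>" using xle xe by simp
    hence "of_int i * p1 < 0" using d0 by simp
    hence "i < 0" using p1 by (simp add: mult_less_0_iff)
    hence "i \<le> -1" by simp
    hence "of_int i * p2 \<le> -1 * p2" using p2 by (intro mult_right_mono) auto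
    hence "y \<le> -p2" using ye 2 by simp
    moreover have "b > -p2" unfolding b_def using Gh by simp
    ultimately show False using yge by simp
  next
    case 3
    have "of_int i * p1 \<ge> -w - \<delta> - q1" using xge xe 3 by simp
    hence "of_int i * p1 > (of_int K - 1) * p1" using d2 by simp
    hence "of_int i > of_int K - (1::real)" using p1 by (simp add: mult_less_cancel_right_pos)
    hence "i \<ge> K" by linarith
    hence "of_int i * p2 \<ge> of_int K * p2" using p2 by (intro mult_right_mono) auto
    hence "y \<ge> of_int K * p2 + q2" using ye 3 by simp
    moreover have "of_int K * p2 + q2 > b + h" using bh Gp by simp
    ultimately show False using yle by simp
  next
    case 4
    have "p1*y = p2*x + of_int j * D" using key by simp
    also have "\<dots> \<ge> p2 * (-w-\<delta>) + 2 * D"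
      using 4 Dp(2) p2 xge by (intro add_mono mult_left_mono mult_right_mono) auto
    finally have A: "p1 * y \<ge> p2 * (-w-\<delta>) + 2 * D" .
    have "(of_int K - 1) * p1 * p2 \<le> (-(w+q1) - \<delta>) * p2" using d2 p2 by (intro mult_right_mono) auto
    hence B: "p1 * (q2 + of_int K * p2) \<le> D - p2*w - p2*\<delta> + p1*p2"
      unfolding D_def by (simp add: algebra_simps)
    have A': "p1*y \<ge> 2*D - p2*w - p2*\<delta>" using A by (simp add: algebra_simps)
    have "p1 * y > p1 * (q2 + of_int K * p2)" using A' B Dp1 by linarith
    hence "y > q2 + of_int K * p2" using p1(1) mult_less_cancel_left_pos by blast
    moreover have "q2 + of_int K * p2 > b + h" using bh Gp by simp
    ultimately show False using yle by simp
  qed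
qed



lemma arithIIa_L1:
  fixes px ry py a :: real and M :: int
  assumes px: "0 < px" "px \<le> 1" and ry: "0 < ry" "ry \<le> 1"
    and py: "1 < py" and a: "1 < a" and aL: "a - 1 \<le> px" and T: "ry + 2*py \<le> 6"
    and M1: "M \<ge> 1" and Mge: "of_int M \<ge> (py - 1)/ry" and W: "px + a*(1 + of_int M) \<le> 6"
  shows "px*ry + py*a \<le> 31/6"
proof -
  have pyM: "py \<le> 1 + of_int M * ry" using Mge ry by (simp add: field_simps)
  have pxry: "px*ry \<le> 1" using px ry by (simp add: mult_le_one)
  consider "M = 1" | "M = 2" | "M \<ge> 3" using M1 by linarith
  then show ?thesis
  proof cases
    case 1
    hence "py \<le> 1 + ry" using pyM by simp
    hence "py * a \<le> (1 + ry) * (1 + px)" using aL py a by (intro mult_mono) auto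
    also have "\<dots> \<le> 2 * 2" using px ry by (intro mult_mono) auto
    finally show ?thesis using pxry by simp
  next
    case 2
    hence py2: "py \<le> 1 + 2*ry" using pyM by simp
    have a3: "3*a \<le> 6 - px" using W 2 by simp
    have py3: "py \<le> (6 - ry)/2" using T by simp
    consider "px \<le> 3/4" "ry \<le> 4/5" | "px \<ge> 3/4" "ry \<ge> 4/5" | "px \<le> 3/4" "ry \<ge> 4/5" | "px \<ge> 3/4" "ry \<le> 4/5"
      by linarith
    then show ?thesis
    proof cases
      case 1
      have "py * a \<le> (1 + 2*ry) * (1 + px)" using aL py2 py a by (intro mult_mono) auto
      moreover have "(1 + 2*ry) * (1 + px) = 1 + px + 2*ry + 2*(px*ry)" by (simp add: algebra_simps)
      moreover have "px * ry \<le> 3/4 * (4/5)" using 1 px ry by (intro mult_mono) auto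
      ultimately show ?thesis using 1 px ry by linarith
    next
      case 2
      have "py * a \<le> ((6 - ry)/2) * ((6 - px)/3)" using a3 py3 py a by (intro mult_mono) auto
      moreover have "((6 - ry)/2) * ((6 - px)/3) = 6 - px - ry + (px*ry)/6" by (simp add: field_simps)
      moreover have "(1-px)*(1-ry) \<le> (1-px)*(1/5)" using 2 px ry by (intro mult_left_mono) auto
      moreover have "(1-px)*(1-ry) \<le> (1/4)*(1-ry)" using 2 px ry by (intro mult_right_mono) auto
      moreover have "(1-px)*(1-ry) = 1 - px - ry + px*ry" by (simp add: algebra_simps)
      moreover have "(1-px)*(1/5) = 1/5 - px/5" "(1/4)*(1-ry) = 1/4 - ry/4" by simp_all
      ultimately show ?thesis using px ry by linarith
    next
      case 3
      have "py * a \<le> ((6 - ry)/2) * (1 + px)" using aL py3 py a by (intro mult_mono) auto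
      moreover have "((6 - ry)/2) * (1 + px) = 3 + 3*px - ry/2 - (px*ry)/2" by (simp add: field_simps)
      moreover have "px * ry \<le> 3/4 * ry" using 3 px ry by (intro mult_right_mono) auto
      ultimately show ?thesis using 3 px ry by linarith
    next
      case 4
      have "py * a \<le> (1 + 2*ry) * ((6 - px)/3)" using a3 py2 py a by (intro mult_mono) auto
      moreover have "(1 + 2*ry) * ((6 - px)/3) = 2 - px/3 + 4*ry - 2*(px*ry)/3" by (simp add: field_simps)
      moreover have "px * (ry - 1) \<le> 3/4 * (ry - 1)" using 4 px ry by (intro mult_right_mono_neg) auto
      hence "px*ry \<le> px + 3/4*ry - 3/4" by (simp add: algebra_simps)
      ultimately show ?thesis using 4 px ry by linarith
    qed
  next
    case 3
    hence "a * 4 \<le> a * (1 + of_int M)" using a by (intro mult_left_mono) auto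
    hence a4: "4*a \<le> 6 - px" using W by simp
    have py3: "py \<le> (6 - ry)/2" using T by simp
    have "py * a \<le> ((6 - ry)/2) * ((6 - px)/4)" using a4 py3 py a by (intro mult_mono) auto
    moreover have "((6 - ry)/2) * ((6 - px)/4) = 9/2 - 3*px/4 - 3*ry/4 + (px*ry)/8" by (simp add: field_simps)
    moreover have "px*ry \<le> px" using px ry by (simp add: mult_le_cancel_left1)
    moreover have "px*ry \<le> ry" using px ry by (simp add: mult_le_cancel_right1)
    ultimately show ?thesis using px ry by linarith
  qed
qed

lemma arithIIa:
  fixes px ry py a :: real and L M :: int
  assumes px: "0 < px" "px \<le> 1" and ry: "0 < ry" "ry \<le> 1"
    and py: "1 < py" and a: "1 < a"
    and Lge: "of_int L \<ge> (a - 1)/px" and T: "ry + py*(1 + of_int L) \<le> 6"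
    and Mge: "of_int M \<ge> (py - 1)/ry" and W: "px + a*(1 + of_int M) \<le> 6"
  shows "px*ry + py*a \<le> 31/6"
proof -
  have "(a-1)/px > 0" using a px by simp
  hence L1: "L \<ge> 1" using Lge by linarith
  have "(py-1)/ry > 0" using py ry by simp
  hence M1: "M \<ge> 1" using Mge by linarith
  have aL: "L = 1 \<Longrightarrow> a - 1 \<le> px" using Lge px by (simp add: field_simps)
  have pM: "M = 1 \<Longrightarrow> py - 1 \<le> ry" using Mge ry by (simp add: field_simps)
  consider "L = 1" | "M = 1" | "L \<ge> 2" "M \<ge> 2" using L1 M1 by linarith
  then show ?thesis
  proof cases
    case 1
    show ?thesis using arithIIa_L1[OF px ry py a aL[OF 1] _ M1 Mge W] T 1 by simp
  next
    case 2
    have "ry*px + a*py \<le> 31/6"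
      using arithIIa_L1[OF ry px a py pM[OF 2] _ L1 Lge] T W 2 by (simp add: algebra_simps)
    thus ?thesis by (simp add: algebra_simps)
  next
    case 3
    have "py * 3 \<le> py * (1 + of_int L)" using py 3 by (intro mult_left_mono) auto
    hence p2: "py \<le> 2" using T ry by simp
    have "a * 3 \<le> a * (1 + of_int M)" using a 3 by (intro mult_left_mono) auto
    hence a2: "a \<le> 2" using W px by simp
    have "py * a \<le> 2 * 2" using p2 a2 py a by (intro mult_mono) auto
    moreover have "px*ry \<le> 1" using px ry by (simp add: mult_le_one)
    ultimately show ?thesis by simp
  qed
qed

lemma arithIIb_L1:
  fixes px ry py b :: real and M :: int
  assumes px: "0 < px" "px \<le> 1" and ry: "0 < ry" "ry \<le> 1"
    and py: "1 < py" "py \<le> 3" and b: "1 < b" and bL: "b - 1 \<le> px"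
    and M1: "M \<ge> 1" and Mge: "of_int M \<ge> (py - 1)/ry" and W: "-px + b*(1 + of_int M) \<le> 6"
  shows "py*b - px*ry \<le> 31/6"
proof -
  have pyM: "py \<le> 1 + of_int M * ry" using Mge ry by (simp add: field_simps)
  have X0: "0 \<le> px*ry" using px ry by simp
  consider "M = 1" | "M = 2" | "M \<ge> 3" using M1 by linarith
  then show ?thesis
  proof cases
    case 1
    hence "py \<le> 1 + ry" using pyM by simp
    hence "py * b \<le> (1 + ry) * (1 + px)" using bL py b by (intro mult_mono) auto
    moreover have "(1 + ry) * (1 + px) = 1 + ry + px + px*ry" by (simp add: algebra_simps)
    ultimately show ?thesis using px ry by linarith
  next
    case 2
    hence "py \<le> 1 + 2*ry" using pyM by simp
    hence "py * b \<le> (1 + 2*ry) * (1 + px)" using bL py b by (intro mult_mono) auto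
    moreover have "(1 + 2*ry) * (1 + px) = 1 + 2*ry + px + 2*(px*ry)" by (simp add: algebra_simps)
    moreover have "px*ry \<le> 1" using px ry by (simp add: mult_le_one)
    ultimately show ?thesis using px ry by linarith
  next
    case 3
    hence "b * 4 \<le> b * (1 + of_int M)" using b by (intro mult_left_mono) auto
    hence b4: "4*b \<le> 6 + px" using W by simp
    consider "px \<le> 2/3" | "px > 2/3" "ry \<ge> 1/12" | "ry < 1/12" by linarith
    then show ?thesis
    proof cases
      case 1
      have "py * b \<le> 3 * (5/3)" using py b bL 1 by (intro mult_mono) auto
      thus ?thesis using X0 by simp
    next
      case 2
      have "py * b \<le> 3 * ((6 + px)/4)" using py b b4 by (intro mult_mono) auto
      moreover have "px * (3/4 - ry) \<le> 2/3"
      proof (cases "ry \<le> 3/4")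
        case True
        have "px * (3/4 - ry) \<le> 1 * (2/3)" using px 2 True by (intro mult_mono) auto
        thus ?thesis by simp
      next
        case False
        hence "px * (3/4 - ry) \<le> 0" using px by (intro mult_nonneg_nonpos) auto
        thus ?thesis by linarith
      qed
      moreover have "px * (3/4 - ry) = 3/4*px - px*ry" by (simp add: algebra_simps)
      moreover have "3 * ((6 + px)/4) = 9/2 + 3/4*px" by (simp add: field_simps)
      ultimately show ?thesis by linarith
    next
      case 3
      have "py * (b * (1 + of_int M)) \<le> (1 + of_int M * ry) * (6 + px)"
        using py b W pyM M1 by (intro mult_mono) auto
      also have "\<dots> \<le> (1 + of_int M * (1/12)) * 7"
        using 3 px ry M1 by (intro mult_mono add_mono mult_left_mono) auto
      also have "\<dots> \<le> 31/6 * (1 + of_int M)" using M1 by simp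
      finally have "(py * b) * (1 + of_int M) \<le> 31/6 * (1 + of_int M)" by (simp add: algebra_simps)
      hence "py * b \<le> 31/6" by (rule mult_right_le_imp_le) (use M1 in simp)
      thus ?thesis using X0 by simp
    qed
  qed
qed

lemma arithIIb:
  fixes px ry py b :: real and L M :: int
  assumes px: "0 < px" "px \<le> 1" and ry: "0 < ry" "ry \<le> 1"
    and py: "1 < py" "py \<le> 3" and b: "1 < b" "b \<le> 3"
    and Lge: "of_int L \<ge> (b - 1)/px" and T: "-ry + py*(1 + of_int L) \<le> 6"
    and Mge: "of_int M \<ge> (py - 1)/ry" and W: "-px + b*(1 + of_int M) \<le> 6"
  shows "py*b - px*ry \<le> 31/6"
proof -
  have "(b-1)/px > 0" using b px by simp
  hence L1: "L \<ge> 1" using Lge by linarith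
  have "(py-1)/ry > 0" using py ry by simp
  hence M1: "M \<ge> 1" using Mge by linarith
  have bL: "L = 1 \<Longrightarrow> b - 1 \<le> px" using Lge px by (simp add: field_simps)
  have pM: "M = 1 \<Longrightarrow> py - 1 \<le> ry" using Mge ry by (simp add: field_simps)
  have X0: "0 \<le> px*ry" using px ry by simp
  consider "L = 1" | "M = 1" | "L \<ge> 2" "M \<ge> 2" using L1 M1 by linarith
  then show ?thesis
  proof cases
    case 1
    show ?thesis using arithIIb_L1[OF px ry py b(1) bL[OF 1] M1 Mge W] .
  next
    case 2
    have "b*py - ry*px \<le> 31/6"
      using arithIIb_L1[OF ry px b py(1) pM[OF 2] L1 Lge] T by (simp add: algebra_simps)
    thus ?thesis by (simp add: algebra_simps)
  next
    case 3
    have "py * 3 \<le> py * (1 + of_int L)" using py 3 by (intro mult_left_mono) auto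
    hence p3: "3*py \<le> 6 + ry" using T by simp
    have "b * 3 \<le> b * (1 + of_int M)" using b 3 by (intro mult_left_mono) auto
    hence b3: "3*b \<le> 6 + px" using W by simp
    consider "M \<ge> 3" | "L \<ge> 3" | "L = 2" "M = 2" using 3 by linarith
    then show ?thesis
    proof cases
      case 1
      hence "b * 4 \<le> b * (1 + of_int M)" using b by (intro mult_left_mono) auto
      hence "4*b \<le> 6 + px" using W by simp
      hence "py * b \<le> (7/3) * (7/4)" using p3 b py px ry by (intro mult_mono) auto
      thus ?thesis using X0 by simp
    next
      case 2
      hence "py * 4 \<le> py * (1 + of_int L)" using py by (intro mult_left_mono) auto
      hence "4*py \<le> 6 + ry" using T by simp
      hence "py * b \<le> (7/4) * (7/3)" using b3 b py px ry by (intro mult_mono) auto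
      thus ?thesis using X0 by simp
    next
      case 4: 3
      have "py * b \<le> ((6 + ry)/3) * ((6 + px)/3)" using p3 b3 b py by (intro mult_mono) auto
      moreover have "((6 + ry)/3) * ((6 + px)/3) = 4 + 2*px/3 + 2*ry/3 + (px*ry)/9" by (simp add: field_simps)
      moreover have "(1-px)*(1-ry) \<ge> 0" using px ry by simp
      moreover have "(1-px)*(1-ry) = 1 - px - ry + px*ry" by (simp add: algebra_simps)
      ultimately show ?thesis using X0 by linarith
    qed
  qed
qed


definition hits :: "(real \<times> real) set \<Rightarrow> real \<Rightarrow> real \<Rightarrow> bool" where
  "hits P w h \<longleftrightarrow> (\<forall>a b. \<exists>z\<in>P. a \<le> fst z \<and> fst z \<le> a + w \<and> b \<le> snd z \<and> snd z \<le> b + h)"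

definition combos :: "real \<times> real \<Rightarrow> real \<times> real \<Rightarrow> (real \<times> real) set" where
  "combos p q = {(of_int i * fst p + of_int j * fst q, of_int i * snd p + of_int j * snd q) | i j. True}"

definition lin :: "real \<Rightarrow> real \<Rightarrow> real \<Rightarrow> real \<Rightarrow> real \<times> real \<Rightarrow> real \<times> real" where
  "lin \<alpha> \<beta> \<gamma> \<delta> z = (\<alpha> * fst z + \<beta> * snd z, \<gamma> * fst z + \<delta> * snd z)"

lemma mem_combos: "z \<in> combos p q \<longleftrightarrow> (\<exists>i j::int. z = (of_int i * fst p + of_int j * fst q, of_int i * snd p + of_int j * snd q))"
  unfolding combos_def by blast

lemma lattice_combos: "lattice u v = combos u v"
  unfolding lattice_def combos_def by (auto simp: prod_eq_iff)

lemma combos_image_lin: "lin \<alpha> \<beta> \<gamma> \<delta> ` combos p q \<subseteq> combos (lin \<alpha> \<beta> \<gamma> \<delta> p) (lin \<alpha> \<beta> \<gamma> \<delta> q)"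
proof
  fix z assume "z \<in> lin \<alpha> \<beta> \<gamma> \<delta> ` combos p q"
  then obtain i j :: int where z: "z = lin \<alpha> \<beta> \<gamma> \<delta> (of_int i * fst p + of_int j * fst q, of_int i * snd p + of_int j * snd q)"
    unfolding combos_def by blast
  show "z \<in> combos (lin \<alpha> \<beta> \<gamma> \<delta> p) (lin \<alpha> \<beta> \<gamma> \<delta> q)"
    unfolding mem_combos by (rule exI[of _ i], rule exI[of _ j]) (simp add: z lin_def algebra_simps)
qed

lemma combos_neg2: "combos p (-q) = combos p q"
proof -
  have "\<And>p q. combos p (-q) \<subseteq> combos p q"
  proof
    fix p q z assume "z \<in> combos p (-q :: real \<times> real)"
    then obtain i j :: int where z: "z = (of_int i * fst p + of_int j * fst (-q), of_int i * snd p + of_int j * snd (-q))"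
      unfolding combos_def by blast
    show "z \<in> combos p q" unfolding mem_combos by (rule exI[of _ i], rule exI[of _ "-j"]) (simp add: z)
  qed
  from this[of p q] this[of p "-q"] show ?thesis by auto
qed

lemma combos_swap_sub: "combos p q \<subseteq> combos q p"
proof
  fix z assume "z \<in> combos p q"
  then obtain i j :: int where z: "z = (of_int i * fst p + of_int j * fst q, of_int i * snd p + of_int j * snd q)"
    unfolding combos_def by blast
  show "z \<in> combos q p" unfolding mem_combos by (rule exI[of _ j], rule exI[of _ i]) (simp add: z)
qed

lemma combos_swap: "combos p q = combos q p"
  using combos_swap_sub by blast

lemma combos_det:
  assumes "z \<in> combos u v" "z' \<in> combos u v"
  shows "\<exists>m::int. det2 z z' = of_int m * det2 u v"
proof -
  obtain i j where z: "z = (of_int i * fst u + of_int j * fst v, of_int i * snd u + of_int j * snd v)"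
    using assms(1) unfolding mem_combos by blast
  obtain k l where z': "z' = (of_int k * fst u + of_int l * fst v, of_int k * snd u + of_int l * snd v)"
    using assms(2) unfolding mem_combos by blast
  show ?thesis by (rule exI[of _ "i*l - j*k"]) (simp add: z z' det2_def algebra_simps)
qed

lemma int_abs_one_or_ge2: "(m::int) \<noteq> 0 \<Longrightarrow> \<bar>m\<bar> = 1 \<or> \<bar>m\<bar> \<ge> 2" by linarith

lemma combos_det_cases:
  assumes "z \<in> combos u v" "z' \<in> combos u v" "det2 z z' \<noteq> 0"
  shows "\<bar>det2 z z'\<bar> = \<bar>det2 u v\<bar> \<or> 2 * \<bar>det2 u v\<bar> \<le> \<bar>det2 z z'\<bar>"
proof -
  obtain m :: int where m: "det2 z z' = of_int m * det2 u v" using combos_det[OF assms(1,2)] by blast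
  have "m \<noteq> 0" using assms(3) m by auto
  then consider "\<bar>m\<bar> = 1" | "\<bar>m\<bar> \<ge> 2" by linarith
  then show ?thesis
  proof cases
    case 1
    hence "\<bar>of_int m :: real\<bar> = 1" by (metis of_int_1 of_int_abs)
    thus ?thesis using m by (simp add: abs_mult)
  next
    case 2
    hence "\<bar>of_int m :: real\<bar> \<ge> 2" by (metis of_int_abs of_int_le_iff of_int_numeral)
    hence "2 * \<bar>det2 u v\<bar> \<le> \<bar>of_int m\<bar> * \<bar>det2 u v\<bar>" by (intro mult_right_mono) auto
    thus ?thesis using m by (simp add: abs_mult)
  qed
qed

lemma combos_basis:
  assumes p: "p \<in> combos u v" and q: "q \<in> combos u v" and d: "\<bar>det2 p q\<bar> = \<bar>det2 u v\<bar>" and d0: "det2 u v \<noteq> 0"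
  shows "combos u v \<subseteq> combos p q"
proof
  fix z assume z: "z \<in> combos u v"
  obtain m1 :: int where m1: "det2 z q = of_int m1 * det2 u v" using combos_det[OF z q] by blast
  obtain m2 :: int where m2: "det2 p z = of_int m2 * det2 u v" using combos_det[OF p z] by blast
  obtain e :: int where e: "det2 p q = of_int e * det2 u v" using combos_det[OF p q] by blast
  have "\<bar>of_int e :: real\<bar> = 1" using d e d0 by (simp add: abs_mult)
  hence e1: "e = 1 \<or> e = -1" by linarith
  define dd where "dd = det2 u v"
  have dd0: "dd \<noteq> 0" using d0 dd_def by simp
  have ident1: "fst z * det2 p q = det2 z q * fst p + det2 p z * fst q"
    and ident2: "snd z * det2 p q = det2 z q * snd p + det2 p z * snd q"
    by (simp_all add: det2_def algebra_simps)
  show "z \<in> combos p q"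
    unfolding mem_combos
  proof (rule exI[of _ "e*m1"], rule exI[of _ "e*m2"])
    have ee: "(of_int e :: real) * of_int e = 1" using e1 by auto
    have c1: "dd * (fst z * of_int e) = dd * (of_int m1 * fst p + of_int m2 * fst q)"
      using ident1 m1 m2 e unfolding dd_def by (simp add: algebra_simps)
    have c1': "fst z * of_int e = of_int m1 * fst p + of_int m2 * fst q"
      using c1 dd0 by (simp only: mult_cancel_left) simp
    have "fst z = (fst z * of_int e) * of_int e" using ee by (simp add: mult.assoc)
    also have "\<dots> = of_int (e*m1) * fst p + of_int (e*m2) * fst q" unfolding c1' by (simp add: algebra_simps)
    finally have X: "fst z = of_int (e*m1) * fst p + of_int (e*m2) * fst q" .
    have c2: "dd * (snd z * of_int e) = dd * (of_int m1 * snd p + of_int m2 * snd q)"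
      using ident2 m1 m2 e unfolding dd_def by (simp add: algebra_simps)
    have c2': "snd z * of_int e = of_int m1 * snd p + of_int m2 * snd q"
      using c2 dd0 by (simp only: mult_cancel_left) simp
    have "snd z = (snd z * of_int e) * of_int e" using ee by (simp add: mult.assoc)
    also have "\<dots> = of_int (e*m1) * snd p + of_int (e*m2) * snd q" unfolding c2' by (simp add: algebra_simps)
    finally have Y: "snd z = of_int (e*m1) * snd p + of_int (e*m2) * snd q" .
    from X Y show "z = (of_int (e*m1) * fst p + of_int (e*m2) * fst q, of_int (e*m1) * snd p + of_int (e*m2) * snd q)"
      by (simp add: prod_eq_iff)
  qed
qed



lemma finite_combos_box:
  assumes d: "det2 u v \<noteq> 0"
  shows "finite (combos u v \<inter> {z. \<bar>fst z\<bar> \<le> B \<and> \<bar>snd z\<bar> \<le> B})"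
proof -
  define N :: int where "N = \<lceil>B * (\<bar>fst u\<bar> + \<bar>snd u\<bar> + \<bar>fst v\<bar> + \<bar>snd v\<bar>) / \<bar>det2 u v\<bar>\<rceil>"
  define f where "f = (\<lambda>(i::int, j::int). (of_int i * fst u + of_int j * fst v, of_int i * snd u + of_int j * snd v))"
  have "combos u v \<inter> {z. \<bar>fst z\<bar> \<le> B \<and> \<bar>snd z\<bar> \<le> B} \<subseteq> f ` ({-N..N} \<times> {-N..N})"
  proof
    fix z assume zz: "z \<in> combos u v \<inter> {z. \<bar>fst z\<bar> \<le> B \<and> \<bar>snd z\<bar> \<le> B}"
    hence "z \<in> combos u v" by simp
    then obtain i j :: int where z: "z = (of_int i * fst u + of_int j * fst v, of_int i * snd u + of_int j * snd v)"
      unfolding mem_combos by blast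
    have zb: "\<bar>fst z\<bar> \<le> B" "\<bar>snd z\<bar> \<le> B" using zz by auto
    have B0: "B \<ge> 0" using zb by linarith
    define S where "S = \<bar>fst u\<bar> + \<bar>snd u\<bar> + \<bar>fst v\<bar> + \<bar>snd v\<bar>"
    have S0: "S \<ge> 0" unfolding S_def by simp
    have ei: "det2 z v = of_int i * det2 u v" unfolding z det2_def by (simp add: algebra_simps)
    have ej: "det2 u z = of_int j * det2 u v" unfolding z det2_def by (simp add: algebra_simps)
    have dpos: "\<bar>det2 u v\<bar> > 0" using d by simp
    have Nge: "B * S / \<bar>det2 u v\<bar> \<le> of_int N" unfolding N_def S_def by (rule le_of_int_ceiling)
    have t1: "\<bar>det2 z v\<bar> \<le> \<bar>fst z * snd v\<bar> + \<bar>snd z * fst v\<bar>"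
      unfolding det2_def by (rule abs_triangle_ineq4)
    have t2: "\<bar>fst z * snd v\<bar> \<le> B * \<bar>snd v\<bar>" using zb by (simp add: abs_mult mult_right_mono)
    have t3: "\<bar>snd z * fst v\<bar> \<le> B * \<bar>fst v\<bar>" using zb by (simp add: abs_mult mult_right_mono)
    have t4: "B * \<bar>snd v\<bar> + B * \<bar>fst v\<bar> \<le> B * S"
    proof -
      have "B * \<bar>snd v\<bar> + B * \<bar>fst v\<bar> = B * (\<bar>snd v\<bar> + \<bar>fst v\<bar>)" by (simp add: algebra_simps)
      also have "\<dots> \<le> B * S" unfolding S_def using B0 by (intro mult_left_mono) auto
      finally show ?thesis .
    qed
    have "\<bar>of_int i\<bar> * \<bar>det2 u v\<bar> \<le> B * S" using t1 t2 t3 t4 ei by (simp add: abs_mult)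
    hence "\<bar>of_int i :: real\<bar> \<le> B * S / \<bar>det2 u v\<bar>" using dpos by (simp add: pos_le_divide_eq)
    hence "of_int \<bar>i\<bar> \<le> (of_int N :: real)" using Nge by simp
    hence ib: "\<bar>i\<bar> \<le> N" by (simp only: of_int_le_iff)
    have s1: "\<bar>det2 u z\<bar> \<le> \<bar>fst u * snd z\<bar> + \<bar>snd u * fst z\<bar>"
      unfolding det2_def by (rule abs_triangle_ineq4)
    have s2: "\<bar>fst u * snd z\<bar> \<le> \<bar>fst u\<bar> * B" using zb by (simp add: abs_mult mult_left_mono)
    have s3: "\<bar>snd u * fst z\<bar> \<le> \<bar>snd u\<bar> * B" using zb by (simp add: abs_mult mult_left_mono)
    have s4: "\<bar>fst u\<bar> * B + \<bar>snd u\<bar> * B \<le> B * S"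
    proof -
      have "\<bar>fst u\<bar> * B + \<bar>snd u\<bar> * B = B * (\<bar>fst u\<bar> + \<bar>snd u\<bar>)" by (simp add: algebra_simps)
      also have "\<dots> \<le> B * S" unfolding S_def using B0 by (intro mult_left_mono) auto
      finally show ?thesis .
    qed
    have "\<bar>of_int j\<bar> * \<bar>det2 u v\<bar> \<le> B * S" using s1 s2 s3 s4 ej by (simp add: abs_mult)
    hence "\<bar>of_int j :: real\<bar> \<le> B * S / \<bar>det2 u v\<bar>" using dpos by (simp add: pos_le_divide_eq)
    hence "of_int \<bar>j\<bar> \<le> (of_int N :: real)" using Nge by simp
    hence jb: "\<bar>j\<bar> \<le> N" by (simp only: of_int_le_iff)
    show "z \<in> f ` ({-N..N} \<times> {-N..N})"
      using ib jb by (intro image_eqI[of _ _ "(i,j)"]) (auto simp: f_def z)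
  qed
  thus ?thesis by (rule finite_subset) simp
qed



lemma exists_col:
  assumes hit: "hits P 1 6" and fin: "finite (P \<inter> {z. \<bar>fst z\<bar> \<le> 3 \<and> \<bar>snd z\<bar> \<le> 3})"
  shows "\<exists>z\<in>P. 0 < fst z \<and> fst z \<le> 1 \<and> \<bar>snd z\<bar> \<le> 3"
proof -
  define X where "X = P \<inter> {z. \<bar>fst z\<bar> \<le> 3 \<and> \<bar>snd z\<bar> \<le> 3}"
  define S where "S = insert 1 ((fst ` {z\<in>X. fst z > 0}) \<union> ((\<lambda>z. fst z - 1) ` {z\<in>X. fst z > 1}))"
  have finX: "finite X" using fin X_def by simp
  have f1: "finite {z\<in>X. fst z > 0}" by (rule finite_subset[OF _ finX]) auto
  have f2: "finite {z\<in>X. fst z > 1}" by (rule finite_subset[OF _ finX]) auto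
  have finS: "finite S" unfolding S_def using f1 f2 by simp
  have S0: "\<And>s. s \<in> S \<Longrightarrow> s > 0" unfolding S_def by auto
  define m where "m = Min S"
  have Sne: "S \<noteq> {}" unfolding S_def by simp
  have m0: "m > 0" unfolding m_def using finS Sne S0 by (simp add: Min_gr_iff)
  have mle: "\<And>s. s \<in> S \<Longrightarrow> m \<le> s" unfolding m_def using finS by (rule Min_le)
  have m1: "m \<le> 1" by (rule mle) (simp add: S_def)
  define t where "t = m / 2"
  obtain z where zP: "z \<in> P" and z: "t \<le> fst z" "fst z \<le> t + 1" "-3 \<le> snd z" "snd z \<le> -3 + 6"
    using hit[unfolded hits_def, rule_format, of t "-3"] by blast
  have t0: "t > 0" "t \<le> 1/2" using m0 m1 by (auto simp: t_def)
  have zX: "z \<in> X" unfolding X_def using zP z t0 by auto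
  have pos: "fst z > 0" using z t0 by simp
  have le1: "fst z \<le> 1"
  proof (rule ccontr)
    assume "\<not> fst z \<le> 1"
    hence "fst z - 1 \<in> S" unfolding S_def using zX by auto
    hence "m \<le> fst z - 1" by (rule mle)
    thus False using z(2) m0 unfolding t_def by simp
  qed
  show ?thesis using zP pos le1 z by auto
qed



abbreviation "reflx \<equiv> lin 1 0 0 (-1)"
abbreviation "swapxy \<equiv> lin 0 1 1 0"
abbreviation "rotxy \<equiv> lin 0 1 (-1) 0"

lemma lin_simps: "reflx z = (fst z, - snd z)" "swapxy z = (snd z, fst z)" "rotxy z = (snd z, - fst z)"
  by (simp_all add: lin_def)

lemma hits_refl: "hits P w h \<Longrightarrow> hits (reflx ` P) w h"
  unfolding hits_def
proof (intro allI)
  fix a b assume H: "\<forall>a b. \<exists>z\<in>P. a \<le> fst z \<and> fst z \<le> a + w \<and> b \<le> snd z \<and> snd z \<le> b + h"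
  obtain z where "z \<in> P" "a \<le> fst z" "fst z \<le> a + w" "-b-h \<le> snd z" "snd z \<le> -b-h + h" using H by blast
  thus "\<exists>z\<in>reflx ` P. a \<le> fst z \<and> fst z \<le> a + w \<and> b \<le> snd z \<and> snd z \<le> b + h"
    by (intro bexI[of _ "reflx z"]) (auto simp: lin_simps)
qed

lemma hits_swap: "hits P w h \<Longrightarrow> hits (swapxy ` P) h w"
  unfolding hits_def
proof (intro allI)
  fix a b assume H: "\<forall>a b. \<exists>z\<in>P. a \<le> fst z \<and> fst z \<le> a + w \<and> b \<le> snd z \<and> snd z \<le> b + h"
  obtain z where "z \<in> P" "b \<le> fst z" "fst z \<le> b + w" "a \<le> snd z" "snd z \<le> a + h" using H by blast
  thus "\<exists>z\<in>swapxy ` P. a \<le> fst z \<and> fst z \<le> a + h \<and> b \<le> snd z \<and> snd z \<le> b + w"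
    by (intro bexI[of _ "swapxy z"]) (auto simp: lin_simps)
qed

lemma hits_rot: "hits P w h \<Longrightarrow> hits (rotxy ` P) h w"
  unfolding hits_def
proof (intro allI)
  fix a b assume H: "\<forall>a b. \<exists>z\<in>P. a \<le> fst z \<and> fst z \<le> a + w \<and> b \<le> snd z \<and> snd z \<le> b + h"
  obtain z where "z \<in> P" "-b-w \<le> fst z" "fst z \<le> -b-w + w" "a \<le> snd z" "snd z \<le> a + h" using H by blast
  thus "\<exists>z\<in>rotxy ` P. a \<le> fst z \<and> fst z \<le> a + h \<and> b \<le> snd z \<and> snd z \<le> b + w"
    by (intro bexI[of _ "rotxy z"]) (auto simp: lin_simps)
qed

lemma gap:
  assumes hit: "hits Q w h" and sub: "Q \<subseteq> combos p q"
    and p: "0 < fst p" "fst p \<le> w" "0 \<le> snd p" and D: "det2 p q > snd p * w" "det2 p q > 0"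
  shows "snd q + snd p * (1 + of_int \<lceil>-(w + fst q)/fst p\<rceil>) \<le> h"
proof (rule gap_core[of "fst p" w "snd p" "snd q" "fst q" Q h])
  show "snd p * w < fst p * snd q - snd p * fst q" "0 < fst p * snd q - snd p * fst q"
    using D by (auto simp: det2_def)
  show "\<And>z. z \<in> Q \<Longrightarrow> \<exists>i j::int. z = (of_int i * fst p + of_int j * fst q, of_int i * snd p + of_int j * snd q)"
    using sub unfolding mem_combos[symmetric] by blast
  show "\<And>a b. \<exists>z\<in>Q. a \<le> fst z \<and> fst z \<le> a + w \<and> b \<le> snd z \<and> snd z \<le> b + h"
    using hit unfolding hits_def by blast
qed (use p in auto)




lemma det2_neg2: "det2 p (-q) = - det2 p q" by (simp add: det2_def)

lemma caseI:
  assumes hit: "hits P 3 3" and sub: "P \<subseteq> combos p q"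
    and p: "0 < fst p" "fst p \<le> 1" "0 \<le> snd p" "snd p \<le> 1" and d: "det2 p q \<noteq> 0"
  shows "\<bar>det2 p q\<bar> \<le> 5"
proof -
  define q' where "q' = (if det2 p q > 0 then q else -q)"
  have dq: "det2 p q' = \<bar>det2 p q\<bar>" using d by (auto simp: q'_def det2_neg2)
  have sub': "P \<subseteq> combos p q'" using sub by (auto simp: q'_def combos_neg2)
  define p1 where "p1 = fst p"
  define p2 where "p2 = snd p"
  define q1 where "q1 = fst q'"
  define q2 where "q2 = snd q'"
  define D where "D = det2 p q'"
  have DD: "D = p1*q2 - p2*q1" unfolding D_def p1_def p2_def q1_def q2_def det2_def by simp
  have D0: "D > 0" using dq d unfolding D_def by simp
  have pp: "0 < p1" "p1 \<le> 1" "0 \<le> p2" "p2 \<le> 1" using p unfolding p1_def p2_def by auto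
  show ?thesis
  proof (cases "D \<le> p2 * 3")
    case True thus ?thesis using pp dq unfolding D_def by linarith
  next
    case False
    have g: "q2 + p2 * (1 + of_int \<lceil>-(3 + q1)/p1\<rceil>) \<le> 3"
      using gap[OF hit sub'] p False D0 unfolding p1_def p2_def q1_def q2_def D_def by simp
    define K where "K = \<lceil>-(3 + q1)/p1\<rceil>"
    have "-(3 + q1)/p1 \<le> of_int K" unfolding K_def by (rule le_of_int_ceiling)
    hence "-(3 + q1) \<le> of_int K * p1" using pp by (simp add: pos_divide_le_eq)
    hence Kp: "-(3 + q1) * p2 \<le> of_int K * p1 * p2" using pp by (intro mult_right_mono) auto
    have "p1 * (q2 + p2 * (1 + of_int K)) \<le> p1 * 3" using g pp unfolding K_def by (intro mult_left_mono) auto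
    hence "p1*q2 + p1*p2 + of_int K * p1 * p2 \<le> 3 * p1" by (simp add: algebra_simps)
    hence D5: "D \<le> 3*p1 + 3*p2 - p1*p2" using Kp unfolding DD by (simp add: algebra_simps)
    have "(1 - p1) * (1 - p2) \<ge> 0" using pp by simp
    hence "p1 + p2 \<le> 1 + p1*p2" by (simp add: algebra_simps)
    moreover have "p1 * p2 \<le> 1" using pp by (simp add: mult_le_one)
    ultimately have "D \<le> 5" using D5 by linarith
    thus ?thesis using dq unfolding D_def by simp
  qed
qed




lemma caseII:
  assumes hT: "hits P 1 6" and hW: "hits P 6 1" and sub: "P \<subseteq> combos p r"
    and p: "0 < fst p" "fst p \<le> 1" "1 < snd p" "snd p \<le> 3"
    and r: "0 < snd r" "snd r \<le> 1" "1 < \<bar>fst r\<bar>" "\<bar>fst r\<bar> \<le> 3"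
  shows "\<bar>det2 p r\<bar> \<le> 31/6"
proof (rule ccontr)
  assume big: "\<not> \<bar>det2 p r\<bar> \<le> 31/6"
  define p1 where "p1 = fst p"
  define p2 where "p2 = snd p"
  define r1 where "r1 = fst r"
  define r2 where "r2 = snd r"
  have pp: "0 < p1" "p1 \<le> 1" "1 < p2" "p2 \<le> 3" using p unfolding p1_def p2_def by auto
  have rr: "0 < r2" "r2 \<le> 1" "1 < \<bar>r1\<bar>" "\<bar>r1\<bar> \<le> 3" using r unfolding r1_def r2_def by auto
  have det: "det2 p r = p1*r2 - p2*r1" unfolding det2_def p1_def p2_def r1_def r2_def by simp
  consider "r1 < -1" | "r1 > 1" using rr by linarith
  then show False
  proof cases
    case 1
    define a where "a = -r1"
    have aa: "1 < a" "a \<le> 3" using 1 rr unfolding a_def by auto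
    have Dd: "det2 p r = p1*r2 + p2*a" unfolding det a_def by simp
    have Dpos: "det2 p r > 0" using Dd pp rr aa by (simp add: add_pos_pos)
    have Dbig: "det2 p r > 31/6" using big Dpos by simp
    have gT: "snd r + snd p * (1 + of_int \<lceil>-(1 + fst r)/fst p\<rceil>) \<le> 6"
      using gap[OF hT sub] p Dbig by simp
    define L where "L = \<lceil>-(1 + r1)/p1\<rceil>"
    have T: "r2 + p2*(1 + of_int L) \<le> 6" using gT unfolding L_def r1_def r2_def p1_def p2_def by simp
    have e: "(a - 1)/p1 = -(1 + r1)/p1" unfolding a_def by (simp add: algebra_simps)
    have Lge: "of_int L \<ge> (a - 1)/p1" unfolding L_def e by (rule le_of_int_ceiling)
    have hW': "hits (rotxy ` P) 1 6" using hits_rot[OF hW] .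
    have sub2: "rotxy ` P \<subseteq> combos (rotxy r) (- rotxy p)"
    proof -
      have "rotxy ` P \<subseteq> rotxy ` combos p r" using sub by auto
      also have "\<dots> \<subseteq> combos (rotxy p) (rotxy r)" by (rule combos_image_lin)
      also have "\<dots> = combos (rotxy r) (- rotxy p)" by (simp add: combos_swap combos_neg2)
      finally show ?thesis .
    qed
    have rp: "rotxy r = (r2, a)" "- rotxy p = (-p2, p1)" unfolding lin_simps a_def r1_def r2_def p1_def p2_def by auto
    have "det2 (rotxy r) (- rotxy p) = p1*r2 + p2*a" unfolding rp det2_def by (simp add: algebra_simps)
    hence dW: "det2 (rotxy r) (- rotxy p) = det2 p r" using Dd by simp
    have gW: "snd (- rotxy p) + snd (rotxy r) * (1 + of_int \<lceil>-(1 + fst (- rotxy p))/fst (rotxy r)\<rceil>) \<le> 6"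
      using gap[OF hW' sub2] rp dW Dbig rr aa by simp
    define M where "M = \<lceil>-(1 + -p2)/r2\<rceil>"
    have W: "p1 + a*(1 + of_int M) \<le> 6" using gW unfolding M_def rp by simp
    have e2: "(p2 - 1)/r2 = -(1 + -p2)/r2" by (simp add: algebra_simps)
    have Mge: "of_int M \<ge> (p2 - 1)/r2" unfolding M_def e2 by (rule le_of_int_ceiling)
    have "p1*r2 + p2*a \<le> 31/6" by (rule arithIIa[OF pp(1,2) rr(1,2) pp(3) aa(1) Lge T Mge W])
    thus False using Dbig Dd by simp
  next
    case 2
    define b where "b = r1"
    have bb: "1 < b" "b \<le> 3" using 2 rr unfolding b_def by auto
    have "p1 * r2 \<le> 1" using pp rr by (simp add: mult_le_one)
    moreover have "p2 * b > 1" using pp bb by (metis less_1_mult)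
    ultimately have Dneg: "det2 p r < 0" unfolding det b_def by simp
    have Dd: "det2 p (-r) = p2*b - p1*r2" unfolding det2_neg2 det b_def by simp
    have Dbig: "det2 p (-r) > 31/6" using big Dneg unfolding det2_neg2 by simp
    have sub1: "P \<subseteq> combos p (-r)" using sub by (simp add: combos_neg2)
    have gT: "snd (-r) + snd p * (1 + of_int \<lceil>-(1 + fst (-r))/fst p\<rceil>) \<le> 6"
      using gap[OF hT sub1] p Dbig by simp
    define L where "L = \<lceil>-(1 + - r1)/p1\<rceil>"
    have T: "-r2 + p2*(1 + of_int L) \<le> 6" using gT unfolding L_def r1_def r2_def p1_def p2_def by simp
    have e: "(b - 1)/p1 = -(1 + - r1)/p1" unfolding b_def by (simp add: algebra_simps)
    have Lge: "of_int L \<ge> (b - 1)/p1" unfolding L_def e by (rule le_of_int_ceiling)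
    have hW': "hits (swapxy ` P) 1 6" using hits_swap[OF hW] .
    have sub2: "swapxy ` P \<subseteq> combos (swapxy r) (- swapxy p)"
    proof -
      have "swapxy ` P \<subseteq> swapxy ` combos p r" using sub by auto
      also have "\<dots> \<subseteq> combos (swapxy p) (swapxy r)" by (rule combos_image_lin)
      also have "\<dots> = combos (swapxy r) (- swapxy p)" by (simp add: combos_swap combos_neg2)
      finally show ?thesis .
    qed
    have rp: "swapxy r = (r2, b)" "- swapxy p = (-p2, -p1)" unfolding lin_simps b_def r1_def r2_def p1_def p2_def by auto
    have "det2 (swapxy r) (- swapxy p) = p2*b - p1*r2" unfolding rp det2_def by (simp add: algebra_simps)
    hence dW: "det2 (swapxy r) (- swapxy p) = det2 p (-r)" using Dd by simp
    have gW: "snd (- swapxy p) + snd (swapxy r) * (1 + of_int \<lceil>-(1 + fst (- swapxy p))/fst (swapxy r)\<rceil>) \<le> 6"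
      using gap[OF hW' sub2] rp dW Dbig rr bb by simp
    define M where "M = \<lceil>-(1 + -p2)/r2\<rceil>"
    have W: "-p1 + b*(1 + of_int M) \<le> 6" using gW unfolding M_def rp by simp
    have e2: "(p2 - 1)/r2 = -(1 + -p2)/r2" by (simp add: algebra_simps)
    have Mge: "of_int M \<ge> (p2 - 1)/r2" unfolding M_def e2 by (rule le_of_int_ceiling)
    have "p2*b - p1*r2 \<le> 31/6" by (rule arithIIb[OF pp(1,2) rr(1,2) pp(3,4) bb Lge T Mge W])
    thus False using Dbig Dd by simp
  qed
qed



lemma primitive:
  assumes z: "z \<in> combos u v" and z0: "z \<noteq> 0"
  shows "\<exists>g::int. g \<ge> 1 \<and> (\<exists>y q. y \<in> combos u v \<and> q \<in> combos u v \<and>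
           fst z = of_int g * fst y \<and> snd z = of_int g * snd y \<and> det2 y q = det2 u v)"
proof -
  obtain i j :: int where zij: "z = (of_int i * fst u + of_int j * fst v, of_int i * snd u + of_int j * snd v)"
    using z unfolding mem_combos by blast
  have ij: "i \<noteq> 0 \<or> j \<noteq> 0" using z0 zij by (auto simp: zero_prod_def)
  define g where "g = gcd i j"
  have g0: "g > 0" unfolding g_def using ij by simp
  define i' where "i' = i div g"
  define j' where "j' = j div g"
  have ii: "i = g * i'" unfolding i'_def g_def by simp
  have jj: "j = g * j'" unfolding j'_def g_def by simp
  have cop: "coprime i' j'" unfolding i'_def j'_def g_def using ij by (rule div_gcd_coprime)
  obtain a b :: int where ab: "a * i' + b * j' = gcd i' j'" using bezout_int by blast
  hence ab1: "a * i' + b * j' = 1" using cop by simp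
  define y where "y = (of_int i' * fst u + of_int j' * fst v, of_int i' * snd u + of_int j' * snd v)"
  define q where "q = (of_int (-b) * fst u + of_int a * fst v, of_int (-b) * snd u + of_int a * snd v)"
  have yc: "y \<in> combos u v" unfolding y_def mem_combos by blast
  have qc: "q \<in> combos u v" unfolding q_def mem_combos by blast
  have "det2 y q = of_int (a * i' + b * j') * det2 u v" unfolding y_def q_def det2_def by (simp add: algebra_simps)
  hence dq: "det2 y q = det2 u v" using ab1 by simp
  have f1: "fst z = of_int g * fst y" unfolding zij y_def ii jj by (simp add: algebra_simps)
  have f2: "snd z = of_int g * snd y" unfolding zij y_def ii jj by (simp add: algebra_simps)
  show ?thesis using g0 yc qc f1 f2 dq by (intro exI[of _ g] conjI exI[of _ y] exI[of _ q]) auto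
qed




lemma caseI_prim:
  assumes d: "det2 u v \<noteq> 0" and hS: "hits (combos u v) 3 3"
    and y: "y \<in> combos u v" and q: "q \<in> combos u v" and dq: "det2 y q = det2 u v"
    and f: "0 < fst y" "fst y \<le> 1" "\<bar>snd y\<bar> \<le> 1"
  shows "\<bar>det2 u v\<bar> \<le> 5"
proof -
  have sub: "combos u v \<subseteq> combos y q" using combos_basis[OF y q _ d] dq by simp
  show ?thesis
  proof (cases "snd y \<ge> 0")
    case True
    have "\<bar>det2 y q\<bar> \<le> 5" using caseI[OF hS sub] f True dq d by simp
    thus ?thesis using dq by simp
  next
    case False
    have h: "hits (reflx ` combos u v) 3 3" using hits_refl[OF hS] .
    have s: "reflx ` combos u v \<subseteq> combos (reflx y) (reflx q)"
      using sub combos_image_lin[of 1 0 0 "-1" y q] by blast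
    have dd: "det2 (reflx y) (reflx q) = - det2 y q" by (simp add: lin_simps det2_def)
    have "\<bar>det2 (reflx y) (reflx q)\<bar> \<le> 5" using caseI[OF h s] f False dq d dd by (simp add: lin_simps)
    thus ?thesis using dq dd by simp
  qed
qed

lemma caseI'_prim:
  assumes d: "det2 u v \<noteq> 0" and hS: "hits (combos u v) 3 3"
    and y: "y \<in> combos u v" and q: "q \<in> combos u v" and dq: "det2 y q = det2 u v"
    and f: "0 < snd y" "snd y \<le> 1" "\<bar>fst y\<bar> \<le> 1"
  shows "\<bar>det2 u v\<bar> \<le> 5"
proof -
  have sub: "combos u v \<subseteq> combos y q" using combos_basis[OF y q _ d] dq by simp
  show ?thesis
  proof (cases "fst y \<ge> 0")
    case True
    have h: "hits (swapxy ` combos u v) 3 3" using hits_swap[OF hS] .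
    have s: "swapxy ` combos u v \<subseteq> combos (swapxy y) (swapxy q)"
      using sub combos_image_lin[of 0 1 1 0 y q] by blast
    have dd: "det2 (swapxy y) (swapxy q) = - det2 y q" by (simp add: lin_simps det2_def)
    have "\<bar>det2 (swapxy y) (swapxy q)\<bar> \<le> 5" using caseI[OF h s] f True dq d dd by (simp add: lin_simps)
    thus ?thesis using dq dd by simp
  next
    case False
    have h: "hits (rotxy ` combos u v) 3 3" using hits_rot[OF hS] .
    have s: "rotxy ` combos u v \<subseteq> combos (rotxy y) (rotxy q)"
      using sub combos_image_lin[of 0 1 "-1" 0 y q] by blast
    have dd: "det2 (rotxy y) (rotxy q) = det2 y q" by (simp add: lin_simps det2_def)
    have "\<bar>det2 (rotxy y) (rotxy q)\<bar> \<le> 5" using caseI[OF h s] f False dq d dd by (simp add: lin_simps)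
    thus ?thesis using dq dd by simp
  qed
qed

theorem lattice_bound:
  assumes d: "det2 u v \<noteq> 0" and hT: "hits (combos u v) 1 6" and hW: "hits (combos u v) 6 1"
    and hS: "hits (combos u v) 3 3"
  shows "\<bar>det2 u v\<bar> \<le> 31/6"
proof (rule ccontr)
  assume big: "\<not> \<bar>det2 u v\<bar> \<le> 31/6"
  define B where "B = {z :: real \<times> real. \<bar>fst z\<bar> \<le> 3 \<and> \<bar>snd z\<bar> \<le> 3}"
  have fin: "finite (combos u v \<inter> B)" unfolding B_def by (rule finite_combos_box[OF d])
  obtain p where pL: "p \<in> combos u v" and p: "0 < fst p" "fst p \<le> 1" "\<bar>snd p\<bar> \<le> 3"
    using exists_col[OF hT fin[unfolded B_def]] by blast
  have "swapxy ` combos u v \<inter> B \<subseteq> swapxy ` (combos u v \<inter> B)" unfolding B_def by (auto simp: lin_simps)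
  hence finS: "finite (swapxy ` combos u v \<inter> B)" using fin by (meson finite_imageI finite_subset)
  obtain z where zL: "z \<in> swapxy ` combos u v" and z: "0 < fst z" "fst z \<le> 1" "\<bar>snd z\<bar> \<le> 3"
    using exists_col[OF hits_swap[OF hW] finS[unfolded B_def]] by blast
  obtain r where rL: "r \<in> combos u v" and zr: "z = swapxy r" using zL by blast
  have r: "0 < snd r" "snd r \<le> 1" "\<bar>fst r\<bar> \<le> 3" using z zr by (auto simp: lin_simps)
  consider "\<bar>snd p\<bar> \<le> 1" | "\<bar>fst r\<bar> \<le> 1" | "\<bar>snd p\<bar> > 1" "\<bar>fst r\<bar> > 1" by linarith
  then show False
  proof cases
    case 1
    have "p \<noteq> 0" using p by auto
    then obtain g y q where g: "g \<ge> (1::int)" and y: "y \<in> combos u v" and q: "q \<in> combos u v"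
      and fy: "fst p = of_int g * fst y" "snd p = of_int g * snd y" and dq: "det2 y q = det2 u v"
      using primitive[OF pL] by blast
    have g1: "(1::real) \<le> of_int g" using g by simp
    have "0 < of_int g * fst y" using p fy by simp
    hence y1: "0 < fst y" using g1 by (simp add: zero_less_mult_iff)
    have "1 * fst y \<le> of_int g * fst y" using y1 g1 by (intro mult_right_mono) auto
    hence y2: "fst y \<le> 1" using p fy by simp
    have "1 * \<bar>snd y\<bar> \<le> \<bar>of_int g\<bar> * \<bar>snd y\<bar>" using g1 by (intro mult_right_mono) auto
    hence y3: "\<bar>snd y\<bar> \<le> 1" using 1 fy by (simp add: abs_mult)
    have "\<bar>det2 u v\<bar> \<le> 5" using caseI_prim[OF d hS y q dq y1 y2 y3] .
    thus False using big by simp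
  next
    case 2
    have "r \<noteq> 0" using r by auto
    then obtain g y q where g: "g \<ge> (1::int)" and y: "y \<in> combos u v" and q: "q \<in> combos u v"
      and fy: "fst r = of_int g * fst y" "snd r = of_int g * snd y" and dq: "det2 y q = det2 u v"
      using primitive[OF rL] by blast
    have g1: "(1::real) \<le> of_int g" using g by simp
    have "0 < of_int g * snd y" using r fy by simp
    hence y1: "0 < snd y" using g1 by (simp add: zero_less_mult_iff)
    have "1 * snd y \<le> of_int g * snd y" using y1 g1 by (intro mult_right_mono) auto
    hence y2: "snd y \<le> 1" using r fy by simp
    have "1 * \<bar>fst y\<bar> \<le> \<bar>of_int g\<bar> * \<bar>fst y\<bar>" using g1 by (intro mult_right_mono) auto
    hence y3: "\<bar>fst y\<bar> \<le> 1" using 2 fy by (simp add: abs_mult)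
    have "\<bar>det2 u v\<bar> \<le> 5" using caseI'_prim[OF d hS y q dq y1 y2 y3] .
    thus False using big by simp
  next
    case 3
    have pr1: "fst p * snd r \<le> 1" using p r by (simp add: mult_le_one)
    have "\<bar>snd p\<bar> * \<bar>fst r\<bar> > 1 * 1" using 3 by (intro mult_strict_mono) auto
    hence pr2: "\<bar>snd p * fst r\<bar> > 1" by (simp add: abs_mult)
    have "\<bar>snd p\<bar> * \<bar>fst r\<bar> \<le> 3 * 3" using p r by (intro mult_mono) auto
    hence pr3: "\<bar>snd p * fst r\<bar> \<le> 3 * 3" by (simp add: abs_mult)
    have dpr: "det2 p r = fst p * snd r - snd p * fst r" by (simp add: det2_def)
    have pr0: "fst p * snd r \<ge> 0" using p r by simp
    have nz: "det2 p r \<noteq> 0"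
    proof
      assume "det2 p r = 0"
      hence "snd p * fst r = fst p * snd r" using dpr by simp
      hence "\<bar>snd p * fst r\<bar> = fst p * snd r" using pr0 by simp
      thus False using pr1 pr2 by simp
    qed
    have "\<bar>det2 p r\<bar> \<le> 10" using pr1 pr3 dpr p r by (simp add: abs_diff_le_iff) (smt (verit) mult_pos_pos)
    hence eq: "\<bar>det2 p r\<bar> = \<bar>det2 u v\<bar>" using combos_det_cases[OF pL rL nz] big by auto
    have sub: "combos u v \<subseteq> combos p r" using combos_basis[OF pL rL eq d] .
    show False
    proof (cases "snd p > 1")
      case True
      have "\<bar>det2 p r\<bar> \<le> 31/6" using caseII[OF hT hW sub] p r True 3 by simp
      thus False using eq big by simp
    next
      case False
      hence sp: "snd p < -1" using 3 by simp
      have h1: "hits (reflx ` combos u v) 1 6" using hits_refl[OF hT] .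
      have h2: "hits (reflx ` combos u v) 6 1" using hits_refl[OF hW] .
      have s: "reflx ` combos u v \<subseteq> combos (reflx p) (- reflx r)"
        using sub combos_image_lin[of 1 0 0 "-1" p r] by (auto simp: combos_neg2)
      have dd: "det2 (reflx p) (- reflx r) = det2 p r" by (simp add: lin_simps det2_def)
      have "\<bar>det2 (reflx p) (- reflx r)\<bar> \<le> 31/6" using caseII[OF h1 h2 s] p r sp 3 by (simp add: lin_simps)
      thus False using eq big dd by simp
    qed
  qed
qed






definition g6 :: "int \<Rightarrow> int" where "g6 x = (2 * (x mod 6) + (x mod 6) div 3) mod 6"
definition gi6 :: "int \<Rightarrow> int" where "gi6 t = (t mod 6) div 2 + 3 * ((t mod 6) mod 2)"

definition Pset :: "(real \<times> real) set" where
  "Pset = {(of_int x, of_int y) | x y :: int. (y - g6 x) mod 6 = 0}"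

lemma g6_mod: "g6 (x mod 6) = g6 x" unfolding g6_def by simp

lemma g6_range: "0 \<le> g6 x" "g6 x < 6" unfolding g6_def by simp_all

lemma g6_gi6_fin: "t \<in> {0,1,2,3,4,5} \<Longrightarrow> g6 (gi6 t) = t"
  by (auto simp: g6_def gi6_def)

lemma g6_gi6: "g6 (gi6 t) = t mod 6"
proof -
  have "t mod 6 \<in> {0,1,2,3,4,5}" by auto
  hence "g6 (gi6 (t mod 6)) = t mod 6" by (rule g6_gi6_fin)
  moreover have "gi6 (t mod 6) = gi6 t" unfolding gi6_def by simp
  ultimately show ?thesis by simp
qed

lemma S_fin: "\<alpha> \<in> {0,1,2,3,4,5} \<Longrightarrow> \<beta> \<in> {0,1,2,3,4,5} \<Longrightarrow>
  \<exists>k\<in>{0,1,2::int}. \<exists>m\<in>{0,1,2::int}. (\<beta> + m - g6 (\<alpha> + k)) mod 6 = 0"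
  by (auto simp: g6_def)



lemma mod6_cases: "(x::int) mod 6 \<in> {0,1,2,3,4,5}"
proof -
  have "0 \<le> x mod 6" "x mod 6 < 6" by simp_all
  thus ?thesis by (simp; presburger)
qed





lemma S_cover: "\<exists>k\<in>{0,1,2::int}. \<exists>m\<in>{0,1,2::int}. (y + m - g6 (x + k)) mod 6 = 0"
proof -
  have a: "x mod 6 \<in> {0,1,2,3,4,5}" and b: "y mod 6 \<in> {0,1,2,3,4,5}" by (rule mod6_cases)+
  from S_fin[OF a b] obtain k where k: "k \<in> {0,1,2::int}"
    and ex: "\<exists>m\<in>{0,1,2::int}. (y mod 6 + m - g6 (x mod 6 + k)) mod 6 = 0" by (rule bexE)
  from ex obtain m where m: "m \<in> {0,1,2::int}" and e: "(y mod 6 + m - g6 (x mod 6 + k)) mod 6 = 0" by (rule bexE)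
  have "(x mod 6 + k) mod 6 = (x + k) mod 6" by (rule mod_add_left_eq)
  hence "g6 (x mod 6 + k) = g6 (x + k)" by (simp add: g6_def)
  hence e2: "(y mod 6 + m - g6 (x + k)) mod 6 = 0" using e by simp
  have "(y mod 6 + m - g6 (x + k)) mod 6 = (y + m - g6 (x + k)) mod 6"
  proof -
    have A: "(y mod 6 + (m - g6 (x + k))) mod 6 = (y + (m - g6 (x + k))) mod 6" by (rule mod_add_left_eq)
    have B: "y mod 6 + m - g6 (x + k) = y mod 6 + (m - g6 (x + k))" "y + m - g6 (x + k) = y + (m - g6 (x + k))" by simp_all
    show ?thesis unfolding B by (rule A)
  qed
  hence "(y + m - g6 (x + k)) mod 6 = 0" using e2 by simp
  thus ?thesis using k m by (intro bexI)
qed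

lemma Pset_mem: "(y - g6 x) mod 6 = 0 \<Longrightarrow> (of_int x, of_int y) \<in> Pset"
  unfolding Pset_def by (rule CollectI, rule exI[of _ x], rule exI[of _ y]) simp




lemma Pset_T: "hits Pset 1 6"
  unfolding hits_def
proof (intro allI)
  fix a b :: real
  define x where "x = \<lceil>a\<rceil>"
  define y0 where "y0 = \<lceil>b\<rceil>"
  define y where "y = y0 + (g6 x - y0) mod 6"
  have "y - g6 x = (g6 x - y0) mod 6 - (g6 x - y0)" unfolding y_def by simp
  hence "(y - g6 x) mod 6 = ((g6 x - y0) mod 6 - (g6 x - y0)) mod 6" by (rule arg_cong)
  also have "\<dots> = ((g6 x - y0) - (g6 x - y0)) mod 6" by (rule mod_diff_left_eq)
  finally have "(y - g6 x) mod 6 = 0" by simp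
  hence mem: "(of_int x, of_int y) \<in> Pset" by (rule Pset_mem)
  have x1: "a \<le> of_int x" "of_int x \<le> a + 1" unfolding x_def by linarith+
  have "0 \<le> (g6 x - y0) mod 6" "(g6 x - y0) mod 6 \<le> 5" by simp_all
  hence "y0 \<le> y" "y \<le> y0 + 5" unfolding y_def by simp_all
  hence y1: "b \<le> of_int y" "of_int y \<le> b + 6" unfolding y0_def by linarith+
  show "\<exists>z\<in>Pset. a \<le> fst z \<and> fst z \<le> a + 1 \<and> b \<le> snd z \<and> snd z \<le> b + 6"
    using mem x1 y1 by (intro bexI[of _ "(of_int x, of_int y)"]) auto
qed




lemma Pset_W: "hits Pset 6 1"
  unfolding hits_def
proof (intro allI)
  fix a b :: real
  define y where "y = \<lceil>b\<rceil>"
  define x0 where "x0 = \<lceil>a\<rceil>"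
  define x where "x = x0 + (gi6 y - x0) mod 6"
  have "x mod 6 = (x0 + (gi6 y - x0)) mod 6" unfolding x_def by (rule mod_add_right_eq)
  hence xm: "x mod 6 = gi6 y mod 6" by simp
  have gi: "0 \<le> gi6 y" "gi6 y < 6" unfolding gi6_def by simp_all
  have "g6 x = g6 (x mod 6)" by (simp add: g6_mod)
  also have "\<dots> = g6 (gi6 y)" using xm gi by simp
  also have "\<dots> = y mod 6" by (rule g6_gi6)
  finally have gx: "g6 x = y mod 6" .
  have "(y - y mod 6) mod 6 = (y - y) mod 6" by (rule mod_diff_right_eq)
  hence "(y - g6 x) mod 6 = 0" using gx by simp
  hence mem: "(of_int x, of_int y) \<in> Pset" by (rule Pset_mem)
  have y1: "b \<le> of_int y" "of_int y \<le> b + 1" unfolding y_def by linarith+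
  have "0 \<le> (gi6 y - x0) mod 6" "(gi6 y - x0) mod 6 \<le> 5" by simp_all
  hence "x0 \<le> x" "x \<le> x0 + 5" unfolding x_def by simp_all
  hence x1: "a \<le> of_int x" "of_int x \<le> a + 6" unfolding x0_def by linarith+
  show "\<exists>z\<in>Pset. a \<le> fst z \<and> fst z \<le> a + 6 \<and> b \<le> snd z \<and> snd z \<le> b + 1"
    using mem x1 y1 by (intro bexI[of _ "(of_int x, of_int y)"]) auto
qed




lemma Pset_S: "hits Pset 3 3"
  unfolding hits_def
proof (intro allI)
  fix a b :: real
  define x0 where "x0 = \<lceil>a\<rceil>"
  define y0 where "y0 = \<lceil>b\<rceil>"
  from S_cover[of y0 x0] obtain k where k: "k \<in> {0,1,2::int}"
    and ex: "\<exists>m\<in>{0,1,2::int}. (y0 + m - g6 (x0 + k)) mod 6 = 0" by (rule bexE)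
  from ex obtain m where m: "m \<in> {0,1,2::int}" and e: "(y0 + m - g6 (x0 + k)) mod 6 = 0" by (rule bexE)
  have mem: "(of_int (x0 + k), of_int (y0 + m)) \<in> Pset" using e by (intro Pset_mem) simp
  have "a \<le> of_int x0" "of_int x0 \<le> a + 1" "b \<le> of_int y0" "of_int y0 \<le> b + 1"
    unfolding x0_def y0_def by linarith+
  moreover have "0 \<le> (of_int k::real)" "(of_int k::real) \<le> 2" "0 \<le> (of_int m::real)" "(of_int m::real) \<le> 2"
    using k m by auto
  moreover have "(of_int (x0 + k)::real) = of_int x0 + of_int k" "(of_int (y0 + m)::real) = of_int y0 + of_int m"
    by simp_all
  ultimately have "a \<le> of_int (x0 + k)" "of_int (x0 + k) \<le> a + 3" "b \<le> of_int (y0 + m)" "of_int (y0 + m) \<le> b + 3"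
    by linarith+
  thus "\<exists>z\<in>Pset. a \<le> fst z \<and> fst z \<le> a + 3 \<and> b \<le> snd z \<and> snd z \<le> b + 3"
    using mem by (intro bexI[of _ "(of_int (x0 + k), of_int (y0 + m))"]) auto
qed







lemma lim_h: "((\<lambda>r::real. (2*r+1)*(2*r+11)/(24*r^2)) \<longlongrightarrow> 1/6) at_top"
  by real_asymp

lemma card_int_interval: "a \<le> b + 1 \<Longrightarrow> real (card {a..b::int}) = of_int (b - a + 1)"
  by simp

lemma Pset_count:
  fixes r :: real assumes r: "r \<ge> 1"
  shows "finite (Pset \<inter> ({-r..r} \<times> {-r..r}))"
    and "real (card (Pset \<inter> ({-r..r} \<times> {-r..r}))) \<le> (2*r+1)*(2*r+11)/6"
proof -
  define X where "X = {\<lceil>-r\<rceil>..\<lfloor>r\<rfloor>}"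
  define T where "T = {\<lceil>(-r-5)/6\<rceil>..\<lfloor>r/6\<rfloor>}"
  define f where "f = (\<lambda>(x::int, t::int). (real_of_int x, real_of_int (g6 x + 6*t)))"
  have sub: "Pset \<inter> ({-r..r} \<times> {-r..r}) \<subseteq> f ` (X \<times> T)"
  proof
    fix z assume z: "z \<in> Pset \<inter> ({-r..r} \<times> {-r..r})"
    hence "z \<in> Pset" by simp
    hence "\<exists>x y::int. z = (of_int x, of_int y) \<and> (y - g6 x) mod 6 = 0" unfolding Pset_def by simp
    then obtain x :: int where "\<exists>y::int. z = (of_int x, of_int y) \<and> (y - g6 x) mod 6 = 0" by (rule exE)
    then obtain y :: int where zm: "z = (of_int x, of_int y) \<and> (y - g6 x) mod 6 = 0" by (rule exE)
    have zxy: "z = (of_int x, of_int y)" using zm by (rule conjunct1)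
    have m: "(y - g6 x) mod 6 = 0" using zm by (rule conjunct2)
    have xr: "-r \<le> of_int x" "of_int x \<le> r" and yr: "-r \<le> of_int y" "of_int y \<le> r" using z zxy by auto
    define t where "t = (y - g6 x) div 6"
    have "(y - g6 x) div 6 * 6 + (y - g6 x) mod 6 = y - g6 x" by (rule div_mult_mod_eq)
    hence yt: "y = g6 x + 6*t" unfolding t_def using m by linarith
    have xX: "x \<in> X" unfolding X_def using xr by (simp add: ceiling_le_iff le_floor_iff)
    have g: "0 \<le> g6 x" "g6 x \<le> 5" using g6_range[of x] by auto
    have "of_int y = of_int (g6 x) + 6 * (of_int t :: real)" using yt by simp
    moreover have "0 \<le> (of_int (g6 x)::real)" "(of_int (g6 x)::real) \<le> 5" using g by simp_all
    ultimately have "-r-5 \<le> 6 * of_int t" "6 * of_int t \<le> r" using yr by linarith+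
    hence "(-r-5)/6 \<le> of_int t" "of_int t \<le> r/6" by simp_all
    hence tT: "t \<in> T" unfolding T_def by (simp add: ceiling_le_iff le_floor_iff)
    show "z \<in> f ` (X \<times> T)" using xX tT by (intro image_eqI[of _ _ "(x,t)"]) (auto simp: f_def zxy yt)
  qed
  have finXT: "finite (X \<times> T)" unfolding X_def T_def by simp
  show fin: "finite (Pset \<inter> ({-r..r} \<times> {-r..r}))" using finite_subset[OF sub] finXT by simp
  have "card (Pset \<inter> ({-r..r} \<times> {-r..r})) \<le> card (f ` (X \<times> T))"
    using sub finXT by (intro card_mono) auto
  also have "\<dots> \<le> card (X \<times> T)" by (rule card_image_le[OF finXT])
  also have "\<dots> = card X * card T" by (rule card_cartesian_product)
  finally have c: "real (card (Pset \<inter> ({-r..r} \<times> {-r..r}))) \<le> real (card X) * real (card T)"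
    by (metis of_nat_le_iff of_nat_mult)
  have "\<lceil>-r\<rceil> \<le> 0" using r by (simp add: ceiling_le_iff)
  moreover have "0 \<le> \<lfloor>r\<rfloor>" using r by simp
  ultimately have "\<lceil>-r\<rceil> \<le> \<lfloor>r\<rfloor> + 1" by linarith
  hence cX: "real (card X) = of_int (\<lfloor>r\<rfloor> - \<lceil>-r\<rceil> + 1)" unfolding X_def by (rule card_int_interval)
  have "of_int \<lfloor>r\<rfloor> \<le> r" by (rule of_int_floor_le)
  moreover have "-r \<le> of_int \<lceil>-r\<rceil>" by (rule le_of_int_ceiling)
  ultimately have "of_int (\<lfloor>r\<rfloor> - \<lceil>-r\<rceil> + 1) \<le> 2*r + 1" by (simp only: of_int_add of_int_diff of_int_1; linarith)
  hence cX': "real (card X) \<le> 2*r + 1" using cX by simp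
  have "\<lceil>(-r-5)/6\<rceil> \<le> 0" using r by (simp add: ceiling_le_iff)
  moreover have "0 \<le> \<lfloor>r/6\<rfloor>" using r by simp
  ultimately have "\<lceil>(-r-5)/6\<rceil> \<le> \<lfloor>r/6\<rfloor> + 1" by linarith
  hence cT: "real (card T) = of_int (\<lfloor>r/6\<rfloor> - \<lceil>(-r-5)/6\<rceil> + 1)" unfolding T_def by (rule card_int_interval)
  have "of_int \<lfloor>r/6\<rfloor> \<le> r/6" by (rule of_int_floor_le)
  moreover have "(-r-5)/6 \<le> of_int \<lceil>(-r-5)/6\<rceil>" by (rule le_of_int_ceiling)
  ultimately have "of_int (\<lfloor>r/6\<rfloor> - \<lceil>(-r-5)/6\<rceil> + 1) \<le> r/6 - (-r-5)/6 + 1" by (simp only: of_int_add of_int_diff of_int_1; linarith)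
  hence cT': "real (card T) \<le> (2*r + 11)/6" using cT by (simp add: field_simps)
  have "real (card X) * real (card T) \<le> (2*r+1) * ((2*r + 11)/6)" using cX' cT' by (intro mult_mono) auto
  thus "real (card (Pset \<inter> ({-r..r} \<times> {-r..r}))) \<le> (2*r+1)*(2*r+11)/6" using c by simp
qed

lemma density_Pset: "density Pset \<le> ereal (1/6)"
proof -
  have ev: "eventually (\<lambda>r. count_ratio Pset r \<le> ereal ((2*r+1)*(2*r+11)/(24*r^2))) at_top"
    using eventually_ge_at_top[of "1::real"]
  proof eventually_elim
    case (elim r)
    have fin: "finite (Pset \<inter> ({-r..r} \<times> {-r..r}))" using Pset_count(1)[OF elim] .
    have c: "real (card (Pset \<inter> ({-r..r} \<times> {-r..r}))) \<le> (2*r+1)*(2*r+11)/6" using Pset_count(2)[OF elim] .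
    have r0: "(2*r)^2 > 0" using elim by simp
    have "real (card (Pset \<inter> ({-r..r} \<times> {-r..r}))) / (2*r)^2 \<le> ((2*r+1)*(2*r+11)/6) / (2*r)^2"
      using c r0 by (intro divide_right_mono) auto
    also have "\<dots> = (2*r+1)*(2*r+11)/(24*r^2)" by (simp add: power2_eq_square field_simps)
    finally show ?case unfolding count_ratio_def using fin by simp
  qed
  have "density Pset \<le> Limsup at_top (\<lambda>r. ereal ((2*r+1)*(2*r+11)/(24*r^2)))"
    unfolding density_def by (rule Limsup_mono[OF ev])
  also have "\<dots> = ereal (1/6)"
    by (rule lim_imp_Limsup) (simp_all add: lim_h tendsto_ereal)
  finally show ?thesis .
qed




lemma indep_det:
  assumes ind: "independent {u, v}" and uv: "u \<noteq> v"
  shows "det2 u v \<noteq> 0"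
proof
  assume d: "det2 u v = 0"
  have i2: "independent {v} \<and> u \<notin> span {v}" using ind uv by (simp add: independent_insert)
  hence "v \<notin> span {}" using independent_insert[of v "{}"] by simp
  hence v0: "v \<noteq> 0" by (auto simp: span_empty)
  have e: "fst u * snd v = snd u * fst v" using d by (simp add: det2_def)
  have "u \<in> span {v}"
  proof (cases "fst v = 0")
    case False
    have "u = (fst u / fst v) *\<^sub>R v"
      using False e by (simp add: prod_eq_iff field_simps)
    thus ?thesis unfolding span_singleton by blast
  next
    case True
    hence sv: "snd v \<noteq> 0" using v0 by (simp add: prod_eq_iff)
    hence "fst u = 0" using e True by simp
    hence "u = (snd u / snd v) *\<^sub>R v" using True sv by (simp add: prod_eq_iff)
    thus ?thesis unfolding span_singleton by blast
  qed
  thus False using i2 by simp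
qed

lemma translate_hits:
  "(\<forall>t. translate t ({0..w} \<times> {0..h}) \<inter> P \<noteq> {}) \<longleftrightarrow> hits P w h"
proof
  assume H: "\<forall>t. translate t ({0..w} \<times> {0..h}) \<inter> P \<noteq> {}"
  show "hits P w h" unfolding hits_def
  proof (intro allI)
    fix a b
    obtain z where z: "z \<in> translate (a,b) ({0..w} \<times> {0..h})" "z \<in> P" using H by blast
    then obtain p where p: "p \<in> {0..w} \<times> {0..h}" "z = p + (a,b)" unfolding translate_def by blast
    show "\<exists>z\<in>P. a \<le> fst z \<and> fst z \<le> a + w \<and> b \<le> snd z \<and> snd z \<le> b + h"
      using z p by (intro bexI[of _ z]) (auto simp: mem_Times_iff)
  qed
next
  assume H: "hits P w h"
  show "\<forall>t. translate t ({0..w} \<times> {0..h}) \<inter> P \<noteq> {}"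
  proof
    fix t :: "real \<times> real"
    obtain z where z: "z \<in> P" "fst t \<le> fst z" "fst z \<le> fst t + w" "snd t \<le> snd z" "snd z \<le> snd t + h"
      using H unfolding hits_def by blast
    have "z - t \<in> {0..w} \<times> {0..h}" using z by (auto simp: mem_Times_iff)
    hence "z \<in> translate t ({0..w} \<times> {0..h})" unfolding translate_def by (intro image_eqI[of _ _ "z - t"]) auto
    thus "translate t ({0..w} \<times> {0..h}) \<inter> P \<noteq> {}" using z by blast
  qed
qed

definition F0c :: "(real \<times> real) set set" where
  "F0c = {{0..1} \<times> {0..6}, {0..6} \<times> {0..1}, {0..3} \<times> {0..3}}"

lemma piercing_F0: "piercing F0c P \<longleftrightarrow> hits P 1 6 \<and> hits P 6 1 \<and> hits P 3 3"
  unfolding piercing_def F0c_def using translate_hits by auto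

lemma card_F0: "card F0c = 3"
proof -
  define R1 :: "(real \<times> real) set" where "R1 = {0..1} \<times> {0..6}"
  define R2 :: "(real \<times> real) set" where "R2 = {0..6} \<times> {0..1}"
  define R3 :: "(real \<times> real) set" where "R3 = {0..3} \<times> {0..3}"
  have a: "(1,6) \<in> R1" "(1,6) \<notin> R2" "(1,6) \<notin> R3" "(6,1) \<in> R2" "(6,1) \<notin> R3"
    unfolding R1_def R2_def R3_def by simp_all
  have n: "R1 \<noteq> R2" "R1 \<noteq> R3" "R2 \<noteq> R3" using a by auto
  have "card {R1, R2, R3} = 3" using n by simp
  thus ?thesis unfolding F0c_def R1_def R2_def R3_def .
qed

lemma rect_box: "a < b \<Longrightarrow> c < d \<Longrightarrow> closed_axis_rect ({a..b} \<times> {c..d})"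
  unfolding closed_axis_rect_def by (rule exI[of _ a], rule exI[of _ b], rule exI[of _ c], rule exI[of _ d]) simp

lemma rect_F0: "\<forall>R\<in>F0c. closed_axis_rect R"
  unfolding F0c_def by (simp add: rect_box)

lemma lpn_F0: "ereal (6/31) \<le> lattice_pierce_num F0c"
  unfolding lattice_pierce_num_def
proof (rule Inf_greatest)
  fix x assume "x \<in> {ereal (1 / \<bar>det2 u v\<bar>) | u v. independent {u, v} \<and> u \<noteq> v \<and> piercing F0c (lattice u v)}"
  then obtain u v where x: "x = ereal (1 / \<bar>det2 u v\<bar>)" and ind: "independent {u, v}" and uv: "u \<noteq> v"
    and pr: "piercing F0c (lattice u v)" by blast
  have d: "det2 u v \<noteq> 0" by (rule indep_det[OF ind uv])
  have h: "hits (combos u v) 1 6" "hits (combos u v) 6 1" "hits (combos u v) 3 3"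
    using pr unfolding piercing_F0 lattice_combos by auto
  have b: "\<bar>det2 u v\<bar> \<le> 31/6" by (rule lattice_bound[OF d h])
  have "6/31 \<le> 1 / \<bar>det2 u v\<bar>" using b d by (simp add: field_simps)
  thus "ereal (6/31) \<le> x" unfolding x by simp
qed

lemma pn_F0: "pierce_num F0c \<le> ereal (1/6)"
proof -
  have "piercing F0c Pset" unfolding piercing_F0 using Pset_T Pset_W Pset_S by simp
  hence "pierce_num F0c \<le> density Pset" unfolding pierce_num_def by (intro Inf_lower) blast
  also have "\<dots> \<le> ereal (1/6)" by (rule density_Pset)
  finally show ?thesis .
qed

theorem theorem5:
  shows "\<exists>F0. card F0 = 3 \<and> (\<forall>R\<in>F0. closed_axis_rect R) \<and>
           lattice_pierce_num F0 \<ge> ereal (36/31) * pierce_num F0"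
proof (intro exI[of _ F0c] conjI)
  show "card F0c = 3" by (rule card_F0)
  show "\<forall>R\<in>F0c. closed_axis_rect R" by (rule rect_F0)
  have "ereal (36/31) * pierce_num F0c \<le> ereal (36/31) * ereal (1/6)"
    by (rule ereal_mult_left_mono[OF pn_F0]) simp
  also have "\<dots> = ereal (6/31)" by simp
  also have "\<dots> \<le> lattice_pierce_num F0c" by (rule lpn_F0)
  finally show "lattice_pierce_num F0c \<ge> ereal (36/31) * pierce_num F0c" .
qed


end
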